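(* Consider a finite-horizon POMDP $\mathcal{M}$ in which, alongside the interaction, beliefs $\bm{b}_1,\dots,\bm{b}_T\in\Delta(\mathcal{S})$ are computed, with $\bm{b}_t$ a deterministic function (not depending on the policy parameters) of the history $(o_1,a_1,\dots,a_{t-1},o_t)$ (e.g. exact Bayesian beliefs or beliefs from an approximate belief oracle). Define the Maximum Believed Entropy objective $$\tilde J(\pi)=\mathbb{E}_{\tau_{\mathcal{B}}\sim p^\pi}\,\mathbb{E}_{\tau_{\tilde{\mathcal{S}}}\sim p(\cdot\mid\tau_{\mathcal{B}})}\big[H(d(\tau_{\tilde{\mathcal{S}}}))\big],$$ where $\tau_{\mathcal{B}}=(\bm{b}_1,\dots,\bm{b}_T)$ and, given $\tau_{\mathcal{B}}$, the believed trajectory $\tau_{\tilde{\mathcal{S}}}=(\tilde s_1,\dots,\tilde s_T)$ has probability $p(\tau_{\tilde{\mathcal{S}}}\mid\tau_{\mathcal{B}})=\prod_{t=1}^T\bm{b}_t(\tilde s_t)$. (i) If $\{\pi_\theta\}_{\theta\in\Theta}$ is a family of policies with information set $\mathcal{I}$ such that $\theta\mapsto\pi_\theta(a\mid i)$ is differentiable and strictly positive for all $a,i$, then $$\nabla_\theta\tilde J(\pi_\theta)=\mathbb{E}_{\tau\sim p^{\pi_\theta}}\,\mathbb{E}_{\tau_{\tilde{\mathcal{S}}}\sim p(\cdot\mid\tau_{\mathcal{B}})}\Big[\Big(\sum_{t=1}^{T-1}\nabla_\theta\log\pi_\theta(a_t\mid i_t)\Big)H(d(\tau_{\tilde{\mathcal{S}}}))\Big].$$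 (ii) For two policies $\pi_1,\pi_2$ with information set $\mathcal{I}$, let $\mathcal{T}_{\mathcal{B}}(\pi_1,\pi_2)$ be the set of belief trajectories with positive probability under $p^{\pi_1}$ or $p^{\pi_2}$, let $\tau^\star_{\mathcal{B}}\in\arg\max_{\tau_{\mathcal{B}}\in\mathcal{T}_{\mathcal{B}}(\pi_1,\pi_2)}\mathbb{E}_{\tau_{\tilde{\mathcal{S}}}\sim p(\cdot\mid\tau_{\mathcal{B}})}H(d(\tau_{\tilde{\mathcal{S}}}))$ and $\bar H(\tau^\star_{\mathcal{B}})=\mathbb{E}_{\tau_{\tilde{\mathcal{S}}}\sim p(\cdot\mid\tau^\star_{\mathcal{B}})}H(d(\tau_{\tilde{\mathcal{S}}}))$. Then $$|\tilde J(\pi_1)-\tilde J(\pi_2)|\le T\,\bar H(\tau^\star_{\mathcal{B}})\,d^{TV}(\pi_1,\pi_2),$$ where $d^{TV}(\pi_1,\pi_2):=\sup_{i\in\mathcal{I}}d^{TV}(\pi_1(\cdot\mid i),\pi_2(\cdot\mid i))$.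
   Context: A finite-horizon POMDP $\mathcal{M}=(\mathcal{S},\mathcal{A},\mathcal{O},\mathbb{P},\mathbb{O},T,\mu)$ has finite state, action and observation sets, transition kernel $\mathbb{P}$, observation kernel $\mathbb{O}$, horizon $T$, initial distribution $\mu$. Under a policy $\pi:\mathcal{I}\to\Delta(\mathcal{A})$: $s_1\sim\mu$, $o_t\sim\mathbb{O}(\cdot\mid s_t)$, and for $t<T$, $a_t\sim\pi(\cdot\mid i_t)$, $s_{t+1}\sim\mathbb{P}(\cdot\mid s_t,a_t)$, with $i_t$ a deterministic function of $(o_1,a_1,\dots,a_{t-1},o_t)$; $p^\pi$ is the law of the joint trajectory $\tau$ (states, actions, observations, beliefs). For a sequence $x=(x_1,\dots,x_T)$ over a finite set, $d(x)$ is its empirical distribution $d_y(x)=\frac1T\sum_t\mathbf{1}\{x_t=y\}$, $H$ is Shannon entropy (natural log), and $d^{TV}(p,q)=\frac12\sum_x|p(x)-q(x)|$. *)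

theory Defs
  imports "HOL-Analysis.Analysis"
begin

text \<open>Lists are 0-indexed: a trajectory is
  (ss, os, acts) with states ss = [s_1..s_T], observations os = [o_1..o_T] and
  actions acts = [a_1..a_(T-1)].  The kernel conventions are:
  mu s = initial probability, P s a s' = P(s' | s,a), Ob s o = O(o | s).
  A history at (0-based) step t is (o_1..o_(t+1), a_1..a_t).\<close>

type_synonym ('o,'a) hist = "'o list \<times> 'a list"

definition is_dist :: "('x \<Rightarrow> real) \<Rightarrow> bool" where
  "is_dist p \<longleftrightarrow> (\<forall>x. 0 \<le> p x) \<and> sum p UNIV = 1"

definition hist_at :: "'o list \<Rightarrow> 'a list \<Rightarrow> nat \<Rightarrow> ('o,'a) hist" where
  "hist_at os acts t = (take (Suc t) os, take t acts)"

definition trajs :: "nat \<Rightarrow> ('s list \<times> 'o list \<times> 'a list) set" where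
  "trajs T = {(ss, os, acts). length ss = T \<and> length os = T \<and> length acts = T - 1}"

definition traj_prob ::
  "('s \<Rightarrow> real) \<Rightarrow> ('s \<Rightarrow> 'a \<Rightarrow> 's \<Rightarrow> real) \<Rightarrow> ('s \<Rightarrow> 'o \<Rightarrow> real) \<Rightarrow> nat \<Rightarrow>
   (('o,'a) hist \<Rightarrow> 'i) \<Rightarrow> ('i \<Rightarrow> 'a \<Rightarrow> real) \<Rightarrow> 's list \<times> 'o list \<times> 'a list \<Rightarrow> real" where
  "traj_prob mu P Ob T info pol \<tau> =
    (case \<tau> of (ss, os, acts) \<Rightarrow>
      if \<tau> \<in> trajs T then
        mu (ss ! 0) * (\<Prod>t<T. Ob (ss ! t) (os ! t)) *
        (\<Prod>t<T - 1. pol (info (hist_at os acts t)) (acts ! t) * P (ss ! t) (acts ! t) (ss ! Suc t))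
      else 0)"

definition belief_traj ::
  "(('o,'a) hist \<Rightarrow> 's \<Rightarrow> real) \<Rightarrow> nat \<Rightarrow> 's list \<times> 'o list \<times> 'a list \<Rightarrow> ('s \<Rightarrow> real) list" where
  "belief_traj bel T \<tau> = (case \<tau> of (ss, os, acts) \<Rightarrow> map (\<lambda>t. bel (hist_at os acts t)) [0..<T])"

definition believed_prob :: "('s \<Rightarrow> real) list \<Rightarrow> 's list \<Rightarrow> real" where
  "believed_prob bs xs = (\<Prod>t<length bs. (bs ! t) (xs ! t))"

definition emp_dist :: "'s list \<Rightarrow> 's \<Rightarrow> real" where
  "emp_dist xs y = real (length (filter (\<lambda>x. x = y) xs)) / real (length xs)"

definition entropy :: "('s \<Rightarrow> real) \<Rightarrow> real" where
  "entropy p = - (\<Sum>y\<in>UNIV. if p y = 0 then 0 else p y * ln (p y))"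

definition believed_entropy :: "('s \<Rightarrow> real) list \<Rightarrow> real" where
  "believed_entropy bs =
     (\<Sum>xs\<in>{xs. length xs = length bs}. believed_prob bs xs * entropy (emp_dist xs))"

definition MBE_obj ::
  "('s \<Rightarrow> real) \<Rightarrow> ('s \<Rightarrow> 'a \<Rightarrow> 's \<Rightarrow> real) \<Rightarrow> ('s \<Rightarrow> 'o \<Rightarrow> real) \<Rightarrow> nat \<Rightarrow>
   (('o,'a) hist \<Rightarrow> 'i) \<Rightarrow> (('o,'a) hist \<Rightarrow> 's \<Rightarrow> real) \<Rightarrow> ('i \<Rightarrow> 'a \<Rightarrow> real) \<Rightarrow> real" where
  "MBE_obj mu P Ob T info bel pol =
     (\<Sum>\<tau>\<in>trajs T. traj_prob mu P Ob T info pol \<tau> *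
        (\<Sum>xs\<in>{xs. length xs = T}.
           believed_prob (belief_traj bel T \<tau>) xs * entropy (emp_dist xs)))"

text \<open>Score term sum_{t=1}^{T-1} grad log pi_theta(a_t | i_t), applied to a direction h,
  written as (D pi_theta(a_t|i_t) h) / pi_theta(a_t|i_t).\<close>
definition score ::
  "nat \<Rightarrow> (('o,'a) hist \<Rightarrow> 'i) \<Rightarrow> ('i \<Rightarrow> 'a \<Rightarrow> real) \<Rightarrow> ('i \<Rightarrow> 'a \<Rightarrow> 'p \<Rightarrow> real) \<Rightarrow>
   's list \<times> 'o list \<times> 'a list \<Rightarrow> 'p \<Rightarrow> real" where
  "score T info pol Dpol \<tau> h =
     (case \<tau> of (ss, os, acts) \<Rightarrow>
       \<Sum>t<T - 1. Dpol (info (hist_at os acts t)) (acts ! t) h / pol (info (hist_at os acts t)) (acts ! t))"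

definition belief_traj_prob ::
  "('s \<Rightarrow> real) \<Rightarrow> ('s \<Rightarrow> 'a \<Rightarrow> 's \<Rightarrow> real) \<Rightarrow> ('s \<Rightarrow> 'o \<Rightarrow> real) \<Rightarrow> nat \<Rightarrow>
   (('o,'a) hist \<Rightarrow> 'i) \<Rightarrow> (('o,'a) hist \<Rightarrow> 's \<Rightarrow> real) \<Rightarrow> ('i \<Rightarrow> 'a \<Rightarrow> real) \<Rightarrow>
   ('s \<Rightarrow> real) list \<Rightarrow> real" where
  "belief_traj_prob mu P Ob T info bel pol B =
     (\<Sum>\<tau>\<in>{\<tau>\<in>trajs T. belief_traj bel T \<tau> = B}. traj_prob mu P Ob T info pol \<tau>)"

definition pos_belief_trajs where
  "pos_belief_trajs mu P Ob T info bel pol1 pol2 =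
     {B. belief_traj_prob mu P Ob T info bel pol1 B > 0 \<or> belief_traj_prob mu P Ob T info bel pol2 B > 0}"

definition tv_dist :: "('x \<Rightarrow> real) \<Rightarrow> ('x \<Rightarrow> real) \<Rightarrow> real" where
  "tv_dist p q = (1/2) * (\<Sum>x\<in>UNIV. \<bar>p x - q x\<bar>)"

definition policy_tv :: "('i \<Rightarrow> 'a \<Rightarrow> real) \<Rightarrow> ('i \<Rightarrow> 'a \<Rightarrow> real) \<Rightarrow> real" where
  "policy_tv pol1 pol2 = (SUP i. tv_dist (pol1 i) (pol2 i))"

end

theory Submission
  imports Defs
begin

lemma finite_len: "finite {xs :: 'x::finite list. length xs = n}"
  using finite_lists_length_eq[of "UNIV :: 'x set" n] by simp

lemma trajs_eq: "trajs T = {ss. length ss = T} \<times> {os. length os = T} \<times> {acts. length acts = T - 1}"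
  unfolding trajs_def by auto

lemma finite_trajs: "finite (trajs T :: ('s::finite list \<times> 'o::finite list \<times> 'a::finite list) set)"
  unfolding trajs_eq by (intro finite_cartesian_product finite_len)

definition ext :: "'s list \<times> 'o list \<times> 'a list \<Rightarrow> 'a \<times> 's \<times> 'o \<Rightarrow> 's list \<times> 'o list \<times> 'a list" where
  "ext \<tau> x = (case \<tau> of (ss,os,acts) \<Rightarrow> case x of (a,s',o') \<Rightarrow> (ss@[s'], os@[o'], acts@[a]))"

lemma trajs_Suc: assumes "1 \<le> m"
  shows "trajs (Suc m) = (\<lambda>(\<tau>,x). ext \<tau> x) ` (trajs m \<times> UNIV)"
proof
  show "(\<lambda>(\<tau>,x). ext \<tau> x) ` (trajs m \<times> UNIV) \<subseteq> trajs (Suc m)"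
    using assms by (auto simp: trajs_def ext_def)
next
  show "trajs (Suc m) \<subseteq> (\<lambda>(\<tau>,x). ext \<tau> x) ` (trajs m \<times> UNIV)"
  proof
    fix t assume t: "t \<in> trajs (Suc m)"
    obtain ss os acts where te: "t = (ss,os,acts)" by (cases t) auto
    have l: "length ss = Suc m" "length os = Suc m" "length acts = m" using t te by (auto simp: trajs_def)
    have "ss \<noteq> []" "os \<noteq> []" "acts \<noteq> []" using l assms by auto
    then have "t = ext (butlast ss, butlast os, butlast acts) (last acts, last ss, last os)"
      using te by (simp add: ext_def)
    moreover have "(butlast ss, butlast os, butlast acts) \<in> trajs m" using l by (simp add: trajs_def)
    ultimately show "t \<in> (\<lambda>(\<tau>,x). ext \<tau> x) ` (trajs m \<times> UNIV)" by force
  qed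
qed

lemma inj_ext: "inj_on (\<lambda>(\<tau>,x). ext \<tau> x) X"
  by (auto simp: inj_on_def ext_def split: prod.splits)

lemma sum_trajs_Suc:
  fixes g :: "'s::finite list \<times> 'o::finite list \<times> 'a::finite list \<Rightarrow> real"
  assumes "1 \<le> m"
  shows "(\<Sum>t\<in>trajs (Suc m). g t) = (\<Sum>\<tau>\<in>trajs m. \<Sum>a\<in>UNIV. \<Sum>s'\<in>UNIV. \<Sum>o'\<in>UNIV. g (ext \<tau> (a,s',o')))"
proof -
  have "(\<Sum>t\<in>trajs (Suc m). g t) = (\<Sum>p\<in>trajs m \<times> UNIV. g (ext (fst p) (snd p)))"
    unfolding trajs_Suc[OF assms] by (subst sum.reindex[OF inj_ext]) (simp add: case_prod_beta)
  also have "\<dots> = (\<Sum>\<tau>\<in>trajs m. \<Sum>x\<in>UNIV. g (ext \<tau> x))"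
    by (simp add: sum.cartesian_product case_prod_beta)
  also have "\<dots> = (\<Sum>\<tau>\<in>trajs m. \<Sum>a\<in>UNIV. \<Sum>s'\<in>UNIV. \<Sum>o'\<in>UNIV. g (ext \<tau> (a,s',o')))"
    by (simp add: UNIV_Times_UNIV[symmetric] sum.cartesian_product case_prod_beta del: UNIV_Times_UNIV)
  finally show ?thesis .
qed

lemma traj_prob_ext:
  assumes t: "(ss,os,acts) \<in> trajs m" and m: "1 \<le> m"
  shows "traj_prob mu P Ob (Suc m) info pol (ext (ss,os,acts) (a,s',o')) =
     traj_prob mu P Ob m info pol (ss,os,acts) * (pol (info (os,acts)) a * (P (last ss) a s' * Ob s' o'))"
proof -
  obtain k where k: "m = Suc k" using m by (cases m) auto
  have l: "length ss = Suc k" "length os = Suc k" "length acts = k" using t k by (auto simp: trajs_def)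
  have mem: "(ss@[s'], os@[o'], acts@[a]) \<in> trajs (Suc m)" using l k by (simp add: trajs_def)
  have h1: "(\<Prod>t<Suc m. Ob ((ss@[s']) ! t) ((os@[o']) ! t)) = (\<Prod>t<m. Ob (ss ! t) (os ! t)) * Ob s' o'"
    using l k by (simp add: nth_append)
  have h2: "(\<Prod>t<Suc m - 1. pol (info (hist_at (os@[o']) (acts@[a]) t)) ((acts@[a]) ! t) * P ((ss@[s']) ! t) ((acts@[a]) ! t) ((ss@[s']) ! Suc t))
     = (\<Prod>t<m - 1. pol (info (hist_at os acts t)) (acts ! t) * P (ss ! t) (acts ! t) (ss ! Suc t)) *
       (pol (info (os,acts)) a * P (last ss) a s')"
  proof -
    have "\<And>t. t < k \<Longrightarrow> pol (info (hist_at (os@[o']) (acts@[a]) t)) ((acts@[a]) ! t) * P ((ss@[s']) ! t) ((acts@[a]) ! t) ((ss@[s']) ! Suc t)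
       = pol (info (hist_at os acts t)) (acts ! t) * P (ss ! t) (acts ! t) (ss ! Suc t)"
      using l by (simp add: nth_append hist_at_def)
    then have "(\<Prod>t<k. pol (info (hist_at (os@[o']) (acts@[a]) t)) ((acts@[a]) ! t) * P ((ss@[s']) ! t) ((acts@[a]) ! t) ((ss@[s']) ! Suc t))
       = (\<Prod>t<k. pol (info (hist_at os acts t)) (acts ! t) * P (ss ! t) (acts ! t) (ss ! Suc t))"
      by (intro prod.cong) auto
    moreover have "hist_at (os@[o']) (acts@[a]) k = (os, acts)" using l by (simp add: hist_at_def)
    moreover have "(ss@[s']) ! k = last ss" proof -
      have "ss \<noteq> []" using l by auto
      then show ?thesis using l by (simp add: nth_append last_conv_nth)
    qed
    ultimately show ?thesis using l k by (simp add: nth_append)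
  qed
  have "mu ((ss@[s']) ! 0) = mu (ss ! 0)" using l by (simp add: nth_append)
  then show ?thesis using t mem h1 h2 unfolding traj_prob_def ext_def by (simp add: ac_simps)
qed

fun Gv :: "('s \<Rightarrow> 'a \<Rightarrow> 's \<Rightarrow> real) \<Rightarrow> ('s \<Rightarrow> 'o \<Rightarrow> real) \<Rightarrow> (('o,'a) hist \<Rightarrow> 'i) \<Rightarrow> ('i \<Rightarrow> 'a \<Rightarrow> real)
   \<Rightarrow> ('s list \<times> 'o list \<times> 'a list \<Rightarrow> real) \<Rightarrow> nat \<Rightarrow> 's list \<times> 'o list \<times> 'a list \<Rightarrow> real" where
  "Gv P Ob info pol f 0 \<tau> = f \<tau>"
| "Gv P Ob info pol f (Suc n) (ss,os,acts) = (\<Sum>a\<in>UNIV. pol (info (os,acts)) a *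
      (\<Sum>s'\<in>UNIV. P (last ss) a s' * (\<Sum>o'\<in>UNIV. Ob s' o' * Gv P Ob info pol f n (ext (ss,os,acts) (a,s',o')))))"

lemma sum_Gv:
  fixes f :: "'s::finite list \<times> 'o::finite list \<times> 'a::finite list \<Rightarrow> real"
  assumes "1 \<le> m"
  shows "(\<Sum>\<tau>\<in>trajs (m+n). traj_prob mu P Ob (m+n) info pol \<tau> * f \<tau>)
       = (\<Sum>\<tau>\<in>trajs m. traj_prob mu P Ob m info pol \<tau> * Gv P Ob info pol f n \<tau>)"
  using assms
proof (induction n arbitrary: m)
  case 0
  then show ?case by simp
next
  case (Suc n)
  have "(\<Sum>\<tau>\<in>trajs (m + Suc n). traj_prob mu P Ob (m + Suc n) info pol \<tau> * f \<tau>)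
      = (\<Sum>\<tau>\<in>trajs (Suc m). traj_prob mu P Ob (Suc m) info pol \<tau> * Gv P Ob info pol f n \<tau>)"
    using Suc.IH[of "Suc m"] Suc.prems by simp
  also have "\<dots> = (\<Sum>\<tau>\<in>trajs m. \<Sum>a\<in>UNIV. \<Sum>s'\<in>UNIV. \<Sum>o'\<in>UNIV.
        traj_prob mu P Ob (Suc m) info pol (ext \<tau> (a,s',o')) * Gv P Ob info pol f n (ext \<tau> (a,s',o')))"
    by (rule sum_trajs_Suc[OF Suc.prems])
  also have "\<dots> = (\<Sum>\<tau>\<in>trajs m. traj_prob mu P Ob m info pol \<tau> * Gv P Ob info pol f (Suc n) \<tau>)"
  proof (rule sum.cong[OF refl])
    fix \<tau> :: "'s list \<times> 'o list \<times> 'a list" assume t: "\<tau> \<in> trajs m"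
    obtain ss os acts where te: "\<tau> = (ss,os,acts)" by (cases \<tau>) auto
    show "(\<Sum>a\<in>UNIV. \<Sum>s'\<in>UNIV. \<Sum>o'\<in>UNIV.
        traj_prob mu P Ob (Suc m) info pol (ext \<tau> (a,s',o')) * Gv P Ob info pol f n (ext \<tau> (a,s',o')))
       = traj_prob mu P Ob m info pol \<tau> * Gv P Ob info pol f (Suc n) \<tau>"
      unfolding te using t te Suc.prems
      by (simp add: traj_prob_ext sum_distrib_left ac_simps)
  qed
  finally show ?case .
qed

lemma dist_le:
  fixes w :: "'x::finite \<Rightarrow> real"
  assumes "is_dist w" "\<And>x. g x \<le> c" shows "(\<Sum>x\<in>UNIV. w x * g x) \<le> c"
proof -
  have "(\<Sum>x\<in>UNIV. w x * g x) \<le> (\<Sum>x\<in>UNIV. w x * c)"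
    using assms by (intro sum_mono mult_left_mono) (auto simp: is_dist_def)
  also have "\<dots> = c" using assms by (simp add: is_dist_def sum_distrib_right[symmetric])
  finally show ?thesis .
qed

lemma dist_ge:
  fixes w :: "'x::finite \<Rightarrow> real"
  assumes "is_dist w" "\<And>x. c \<le> g x" shows "c \<le> (\<Sum>x\<in>UNIV. w x * g x)"
proof -
  have "(\<Sum>x\<in>UNIV. w x * c) \<le> (\<Sum>x\<in>UNIV. w x * g x)"
    using assms by (intro sum_mono mult_left_mono) (auto simp: is_dist_def)
  moreover have "(\<Sum>x\<in>UNIV. w x * c) = c" using assms by (simp add: is_dist_def sum_distrib_right[symmetric])
  ultimately show ?thesis by simp
qed

lemma dist_abs:
  fixes w :: "'x::finite \<Rightarrow> real"
  assumes "is_dist w" "\<And>x. \<bar>g x\<bar> \<le> c" shows "\<bar>\<Sum>x\<in>UNIV. w x * g x\<bar> \<le> c"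
proof -
  have "(\<Sum>x\<in>UNIV. w x * g x) \<le> c" using assms by (intro dist_le) (auto simp: abs_le_iff)
  moreover have "- c \<le> (\<Sum>x\<in>UNIV. w x * g x)"
    by (rule dist_ge[OF assms(1)]) (meson abs_le_D2 minus_le_iff assms(2))
  ultimately show ?thesis by simp
qed

lemma tv_bound:
  fixes p q :: "'x::finite \<Rightarrow> real"
  assumes p: "is_dist p" and q: "is_dist q" and g: "\<And>x. 0 \<le> g x \<and> g x \<le> M"
  shows "\<bar>\<Sum>x\<in>UNIV. (p x - q x) * g x\<bar> \<le> tv_dist p q * M"
proof -
  have z0: "(\<Sum>x\<in>UNIV. p x - q x) = 0" using p q by (simp add: is_dist_def sum_subtractf)
  have z: "(\<Sum>x\<in>UNIV. (p x - q x) * (M/2)) = 0"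
    by (subst sum_distrib_right[symmetric]) (simp add: z0)
  have "(\<Sum>x\<in>UNIV. (p x - q x) * g x) = (\<Sum>x\<in>UNIV. (p x - q x) * g x) - (\<Sum>x\<in>UNIV. (p x - q x) * (M/2))"
    using z by simp
  also have "\<dots> = (\<Sum>x\<in>UNIV. (p x - q x) * (g x - M/2))"
    by (simp add: sum_subtractf[symmetric] algebra_simps)
  finally have e: "(\<Sum>x\<in>UNIV. (p x - q x) * g x) = (\<Sum>x\<in>UNIV. (p x - q x) * (g x - M/2))" .
  have "\<bar>\<Sum>x\<in>UNIV. (p x - q x) * (g x - M/2)\<bar> \<le> (\<Sum>x\<in>UNIV. \<bar>(p x - q x) * (g x - M/2)\<bar>)"
    by (rule sum_abs)
  also have "\<dots> \<le> (\<Sum>x\<in>UNIV. \<bar>p x - q x\<bar> * (M/2))"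
  proof (rule sum_mono)
    fix x
    have "\<bar>g x - M/2\<bar> \<le> M/2" unfolding abs_le_iff using g[of x] by auto
    then have "\<bar>p x - q x\<bar> * \<bar>g x - M/2\<bar> \<le> \<bar>p x - q x\<bar> * (M/2)"
      by (intro mult_left_mono) auto
    then show "\<bar>(p x - q x) * (g x - M/2)\<bar> \<le> \<bar>p x - q x\<bar> * (M/2)"
      by (simp only: abs_mult)
  qed
  also have "\<dots> = tv_dist p q * M" unfolding tv_dist_def
    by (subst sum_distrib_right[symmetric]) simp
  finally show ?thesis using e by simp
qed

lemma Gv_bounds:
  fixes f :: "'s::finite list \<times> 'o::finite list \<times> 'a::finite list \<Rightarrow> real"
  assumes P: "\<And>s a. is_dist (P s a)" and Ob: "\<And>s. is_dist (Ob s)" and pol: "\<And>i. is_dist (pol i)"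
    and f: "\<And>\<tau>. 0 \<le> f \<tau> \<and> f \<tau> \<le> M"
  shows "0 \<le> Gv P Ob info pol f n \<tau> \<and> Gv P Ob info pol f n \<tau> \<le> M"
proof (induction n arbitrary: \<tau>)
  case 0 then show ?case using f by simp
next
  case (Suc n)
  obtain ss os acts where te: "\<tau> = (ss,os,acts)" by (cases \<tau>) auto
  show ?case unfolding te Gv.simps
    by (intro conjI dist_le dist_ge pol P Ob) (use Suc.IH in auto)
qed

lemma Gv_diff:
  fixes f :: "'s::finite list \<times> 'o::finite list \<times> 'a::finite list \<Rightarrow> real"
  assumes P: "\<And>s a. is_dist (P s a)" and Ob: "\<And>s. is_dist (Ob s)"
    and pA: "\<And>i. is_dist (pA i)" and pB: "\<And>i. is_dist (pB i)"
    and tv: "\<And>i. tv_dist (pA i) (pB i) \<le> \<delta>"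
    and f: "\<And>\<tau>. 0 \<le> f \<tau> \<and> f \<tau> \<le> M"
  shows "\<bar>Gv P Ob info pA f n \<tau> - Gv P Ob info pB f n \<tau>\<bar> \<le> real n * \<delta> * M"
proof (induction n arbitrary: \<tau>)
  case 0 then show ?case by simp
next
  case (Suc n)
  obtain ss os acts where te: "\<tau> = (ss,os,acts)" by (cases \<tau>) auto
  have M0: "0 \<le> M" using f[of undefined] by linarith
  define X where "X pol a = (\<Sum>s'\<in>UNIV. P (last ss) a s' * (\<Sum>o'\<in>UNIV. Ob s' o' * Gv P Ob info pol f n (ext (ss,os,acts) (a,s',o'))))" for pol a
  have G: "Gv P Ob info pol f (Suc n) \<tau> = (\<Sum>a\<in>UNIV. pol (info (os,acts)) a * X pol a)" for pol
    unfolding te X_def by simp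
  have Xd: "\<bar>X pA a - X pB a\<bar> \<le> real n * \<delta> * M" for a
  proof -
    have "X pA a - X pB a = (\<Sum>s'\<in>UNIV. P (last ss) a s' * (\<Sum>o'\<in>UNIV. Ob s' o' *
        (Gv P Ob info pA f n (ext (ss,os,acts) (a,s',o')) - Gv P Ob info pB f n (ext (ss,os,acts) (a,s',o')))))"
      unfolding X_def by (simp add: sum_subtractf[symmetric] right_diff_distrib[symmetric])
    also have "\<bar>\<dots>\<bar> \<le> real n * \<delta> * M"
      by (intro dist_abs P Ob Suc.IH)
    finally show ?thesis .
  qed
  have X2: "0 \<le> X pB a \<and> X pB a \<le> M" for a
    unfolding X_def by (intro conjI dist_le dist_ge P Ob) (use Gv_bounds[where P=P and Ob=Ob and pol=pB and f=f and M=M, OF P Ob pB f] in auto)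
  have "Gv P Ob info pA f (Suc n) \<tau> - Gv P Ob info pB f (Suc n) \<tau>
     = (\<Sum>a\<in>UNIV. pA (info (os,acts)) a * (X pA a - X pB a))
       + (\<Sum>a\<in>UNIV. (pA (info (os,acts)) a - pB (info (os,acts)) a) * X pB a)"
    unfolding G by (simp add: sum_subtractf[symmetric] sum.distrib[symmetric] algebra_simps)
  also have "\<bar>\<dots>\<bar> \<le> real n * \<delta> * M + \<delta> * M"
  proof -
    have "\<bar>\<Sum>a\<in>UNIV. pA (info (os,acts)) a * (X pA a - X pB a)\<bar> \<le> real n * \<delta> * M"
      by (intro dist_abs pA Xd)
    moreover have "\<bar>\<Sum>a\<in>UNIV. (pA (info (os,acts)) a - pB (info (os,acts)) a) * X pB a\<bar> \<le> tv_dist (pA (info (os,acts))) (pB (info (os,acts))) * M"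
      by (intro tv_bound pA pB X2)
    moreover have "tv_dist (pA (info (os,acts))) (pB (info (os,acts))) * M \<le> \<delta> * M"
      using tv M0 by (intro mult_right_mono) auto
    ultimately show ?thesis by (smt (verit) abs_triangle_ineq)
  qed
  finally show ?case by (simp add: algebra_simps)
qed

lemma traj_prob_nonneg:
  assumes mu: "is_dist mu" and P: "\<And>s a. is_dist (P s a)" and Ob: "\<And>s. is_dist (Ob s)"
    and pol: "\<And>i. is_dist (pol i)"
  shows "0 \<le> traj_prob mu P Ob T info pol \<tau>"
proof -
  obtain ss os acts where te: "\<tau> = (ss,os,acts)" by (cases \<tau>) auto
  show ?thesis unfolding te traj_prob_def using mu P Ob pol
    by (auto simp: is_dist_def intro!: mult_nonneg_nonneg prod_nonneg)
qed

lemma traj_prob_1: "traj_prob mu P Ob 1 info pol ([s],[o'],[]) = mu s * Ob s o'"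
  by (simp add: traj_prob_def trajs_def)

lemma trajs_1: "trajs 1 = (\<lambda>(s,o'). ([s],[o'],[])) ` UNIV"
proof -
  have "t \<in> (\<lambda>(s,o'). ([s],[o'],[])) ` UNIV" if "t \<in> trajs 1" for t :: "'a list \<times> 'b list \<times> 'c list"
  proof -
    obtain ss os acts where te: "t = (ss,os,acts)" by (cases t) auto
    have "length ss = 1" "length os = 1" "acts = []" using that te by (auto simp: trajs_def)
    then obtain s o' where "ss = [s]" "os = [o']" by (auto simp: length_Suc_conv)
    then show ?thesis using te \<open>acts = []\<close> by force
  qed
  then show ?thesis by (auto simp: trajs_def)
qed

lemma sum_trajs_1:
  fixes mu :: "'s::finite \<Rightarrow> real" and Ob :: "'s \<Rightarrow> 'o::finite \<Rightarrow> real"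
  assumes mu: "is_dist mu" and Ob: "\<And>s. is_dist (Ob s)"
  shows "(\<Sum>\<tau>\<in>(trajs 1 :: ('s list \<times> 'o list \<times> 'a list) set). traj_prob mu P Ob 1 info pol \<tau>) = 1"
proof -
  have inj: "inj_on (\<lambda>(s::'s,o'::'o). ([s],[o'],[] :: 'a list)) UNIV" by (auto simp: inj_on_def)
  have "(\<Sum>\<tau>\<in>(trajs 1 :: ('s list \<times> 'o list \<times> 'a list) set). traj_prob mu P Ob 1 info pol \<tau>)
      = (\<Sum>x\<in>UNIV. mu (fst x) * Ob (fst x) (snd x))"
    unfolding trajs_1 by (subst sum.reindex[OF inj]) (simp add: case_prod_beta traj_prob_1[unfolded One_nat_def])
  also have "\<dots> = (\<Sum>s\<in>UNIV. mu s * (\<Sum>o'\<in>UNIV. Ob s o'))"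
    by (simp add: UNIV_Times_UNIV[symmetric] sum.cartesian_product case_prod_beta sum_distrib_left del: UNIV_Times_UNIV)
  also have "\<dots> = 1" using mu Ob by (simp add: is_dist_def)
  finally show ?thesis .
qed

lemma entropy_emp_nonneg: "0 \<le> entropy (emp_dist xs)"
proof -
  have "(if emp_dist xs y = 0 then 0 else emp_dist xs y * ln (emp_dist xs y)) \<le> 0" for y
  proof -
    have a: "0 \<le> emp_dist xs y" by (simp add: emp_dist_def)
    have b: "emp_dist xs y \<le> 1"
      by (cases "length xs = 0") (auto simp: emp_dist_def divide_le_eq_1 length_filter_le)
    show ?thesis
    proof (cases "emp_dist xs y = 0")
      case False
      then have "0 < emp_dist xs y" using a by simp
      then have "ln (emp_dist xs y) \<le> 0" using b by simp
      then show ?thesis using a False by (simp add: mult_nonneg_nonpos)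
    qed simp
  qed
  then show ?thesis unfolding entropy_def by (simp add: sum_nonpos)
qed

lemma believed_entropy_nonneg:
  assumes "\<And>b. b \<in> set bs \<Longrightarrow> \<forall>s. 0 \<le> b s"
  shows "0 \<le> believed_entropy bs"
  unfolding believed_entropy_def believed_prob_def
  using assms by (intro sum_nonneg mult_nonneg_nonneg prod_nonneg entropy_emp_nonneg) auto

lemma tv_le1: assumes "is_dist p" "is_dist q" shows "tv_dist p q \<le> 1"
proof -
  have "(\<Sum>x\<in>UNIV. \<bar>p x - q x\<bar>) \<le> (\<Sum>x\<in>UNIV. p x + q x)"
  proof (rule sum_mono)
    fix x have "0 \<le> p x" "0 \<le> q x" using assms by (auto simp: is_dist_def)
    then show "\<bar>p x - q x\<bar> \<le> p x + q x" by linarith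
  qed
  then show ?thesis using assms by (simp add: tv_dist_def is_dist_def sum.distrib)
qed

lemma tv_nonneg: "0 \<le> tv_dist p q"
  by (simp add: tv_dist_def sum_nonneg)

lemma policy_tv_props:
  assumes "\<And>i. is_dist (pol1 i)" "\<And>i. is_dist (pol2 i)"
  shows "tv_dist (pol1 i) (pol2 i) \<le> policy_tv pol1 pol2" "0 \<le> policy_tv pol1 pol2"
proof -
  have bdd: "bdd_above (range (\<lambda>i. tv_dist (pol1 i) (pol2 i)))"
    using assms tv_le1 by (intro bdd_aboveI2) blast
  show "tv_dist (pol1 i) (pol2 i) \<le> policy_tv pol1 pol2"
    unfolding policy_tv_def by (rule cSUP_upper[OF _ bdd]) simp
  then show "0 \<le> policy_tv pol1 pol2" using tv_nonneg order_trans by blast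
qed

lemma length_belief_traj: "length (belief_traj bel T \<tau>) = T"
  by (cases \<tau>) (auto simp: belief_traj_def)

lemma MBE_alt: "MBE_obj mu P Ob T info bel pol =
   (\<Sum>\<tau>\<in>trajs T. traj_prob mu P Ob T info pol \<tau> * believed_entropy (belief_traj bel T \<tau>))"
  unfolding MBE_obj_def believed_entropy_def length_belief_traj ..

lemma part2:
  fixes mu :: "'s::finite \<Rightarrow> real"
    and P :: "'s \<Rightarrow> 'a::finite \<Rightarrow> 's \<Rightarrow> real"
    and Ob :: "'s \<Rightarrow> 'o::finite \<Rightarrow> real"
    and T :: nat
    and info :: "('o,'a) hist \<Rightarrow> 'i"
    and bel :: "('o,'a) hist \<Rightarrow> 's \<Rightarrow> real"
    and pol1 pol2 :: "'i \<Rightarrow> 'a \<Rightarrow> real"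
  assumes T_pos: "0 < T"
    and mu: "is_dist mu"
    and P: "\<And>s a. is_dist (P s a)"
    and Ob: "\<And>s. is_dist (Ob s)"
    and bel: "\<And>h. is_dist (bel h)"
    and pol1: "\<And>i. is_dist (pol1 i)" and pol2: "\<And>i. is_dist (pol2 i)"
    and Bin: "Bstar \<in> pos_belief_trajs mu P Ob T info bel pol1 pol2"
    and maxB: "\<And>B. B\<in>pos_belief_trajs mu P Ob T info bel pol1 pol2 \<Longrightarrow>
          believed_entropy B \<le> believed_entropy Bstar"
  shows "\<bar>MBE_obj mu P Ob T info bel pol1 - MBE_obj mu P Ob T info bel pol2\<bar>
         \<le> real T * believed_entropy Bstar * policy_tv pol1 pol2"
proof -
  define M where "M = believed_entropy Bstar"
  define \<delta> where "\<delta> = policy_tv pol1 pol2"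
  define p1 where "p1 = traj_prob mu P Ob T info pol1"
  define p2 where "p2 = traj_prob mu P Ob T info pol2"
  define HB where "HB \<tau> = believed_entropy (belief_traj bel T \<tau>)" for \<tau>
  define f where "f \<tau> = (if p1 \<tau> > 0 \<or> p2 \<tau> > 0 then HB \<tau> else 0)" for \<tau>
  have p1nn: "0 \<le> p1 \<tau>" for \<tau> unfolding p1_def by (rule traj_prob_nonneg[OF mu P Ob pol1])
  have p2nn: "0 \<le> p2 \<tau>" for \<tau> unfolding p2_def by (rule traj_prob_nonneg[OF mu P Ob pol2])
  have HBnn: "0 \<le> HB \<tau>" for \<tau>
    unfolding HB_def
  proof (rule believed_entropy_nonneg)
    fix b assume "b \<in> set (belief_traj bel T \<tau>)"
    then have "\<exists>h. b = bel h" by (cases \<tau>) (auto simp: belief_traj_def simp del: ex_simps split_paired_Ex)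
    then obtain h where "b = bel h" by blast
    then show "\<forall>s. 0 \<le> b s" using bel by (simp add: is_dist_def)
  qed
  have pos1: "belief_traj bel T \<tau> \<in> pos_belief_trajs mu P Ob T info bel pol1 pol2"
    if "p1 \<tau> > 0 \<or> p2 \<tau> > 0" for \<tau>
  proof -
    have tin: "\<tau> \<in> trajs T" using that unfolding p1_def p2_def
      by (cases \<tau>) (auto simp: traj_prob_def split: if_splits)
    have fin: "finite {\<tau>'\<in>trajs T. belief_traj bel T \<tau>' = belief_traj bel T \<tau>}"
      using finite_trajs by (rule finite_subset[rotated]) auto
    have "p1 \<tau> \<le> belief_traj_prob mu P Ob T info bel pol1 (belief_traj bel T \<tau>)"
      unfolding belief_traj_prob_def p1_def
      by (rule member_le_sum[OF _ _ fin]) (use tin traj_prob_nonneg[OF mu P Ob pol1] in auto)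
    moreover have "p2 \<tau> \<le> belief_traj_prob mu P Ob T info bel pol2 (belief_traj bel T \<tau>)"
      unfolding belief_traj_prob_def p2_def
      by (rule member_le_sum[OF _ _ fin]) (use tin traj_prob_nonneg[OF mu P Ob pol2] in auto)
    ultimately show ?thesis using that unfolding pos_belief_trajs_def by auto
  qed
  have M0: "0 \<le> M"
  proof -
    have "{\<tau>\<in>trajs T. belief_traj bel T \<tau> = Bstar} \<noteq> {}"
    proof
      assume e: "{\<tau>\<in>trajs T. belief_traj bel T \<tau> = Bstar} = {}"
      have "belief_traj_prob mu P Ob T info bel pol Bstar = 0" for pol
        unfolding belief_traj_prob_def by (subst e) simp
      then show False using Bin unfolding pos_belief_trajs_def by simp
    qed
    then obtain \<tau> where "belief_traj bel T \<tau> = Bstar" by blast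
    then show ?thesis using HBnn[of \<tau>] unfolding M_def HB_def by simp
  qed
  have fb: "0 \<le> f \<tau> \<and> f \<tau> \<le> M" for \<tau>
    using HBnn pos1[of \<tau>] maxB M0 unfolding f_def M_def HB_def by auto
  note ptv = policy_tv_props[of pol1 pol2, OF pol1 pol2]
  have d0: "0 \<le> \<delta>" unfolding \<delta>_def by (rule ptv(2))
  have dtv: "tv_dist (pol1 i) (pol2 i) \<le> \<delta>" for i unfolding \<delta>_def by (rule ptv(1))
  have J1: "MBE_obj mu P Ob T info bel pol1 = (\<Sum>\<tau>\<in>trajs T. p1 \<tau> * f \<tau>)"
    unfolding MBE_alt p1_def[symmetric] HB_def[symmetric]
  proof (rule sum.cong[OF refl])
    fix \<tau> show "p1 \<tau> * HB \<tau> = p1 \<tau> * f \<tau>"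
      using p1nn[of \<tau>] by (cases "0 < p1 \<tau>") (auto simp: f_def)
  qed
  have J2: "MBE_obj mu P Ob T info bel pol2 = (\<Sum>\<tau>\<in>trajs T. p2 \<tau> * f \<tau>)"
    unfolding MBE_alt p2_def[symmetric] HB_def[symmetric]
  proof (rule sum.cong[OF refl])
    fix \<tau> show "p2 \<tau> * HB \<tau> = p2 \<tau> * f \<tau>"
      using p2nn[of \<tau>] by (cases "0 < p2 \<tau>") (auto simp: f_def)
  qed
  have T1: "1 + (T - 1) = T" using T_pos by simp
  have S1: "(\<Sum>\<tau>\<in>trajs T. p1 \<tau> * f \<tau>) = (\<Sum>\<tau>\<in>trajs 1. traj_prob mu P Ob 1 info pol1 \<tau> * Gv P Ob info pol1 f (T-1) \<tau>)"
    using sum_Gv[of 1 mu P Ob "T-1" info pol1 f] unfolding T1 p1_def by simp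
  have S2: "(\<Sum>\<tau>\<in>trajs T. p2 \<tau> * f \<tau>) = (\<Sum>\<tau>\<in>trajs 1. traj_prob mu P Ob 1 info pol1 \<tau> * Gv P Ob info pol2 f (T-1) \<tau>)"
  proof -
    have "(\<Sum>\<tau>\<in>trajs T. p2 \<tau> * f \<tau>) = (\<Sum>\<tau>\<in>trajs 1. traj_prob mu P Ob 1 info pol2 \<tau> * Gv P Ob info pol2 f (T-1) \<tau>)"
      using sum_Gv[of 1 mu P Ob "T-1" info pol2 f] unfolding T1 p2_def by simp
    also have "\<dots> = (\<Sum>\<tau>\<in>trajs 1. traj_prob mu P Ob 1 info pol1 \<tau> * Gv P Ob info pol2 f (T-1) \<tau>)"
      by (rule sum.cong[OF refl]) (auto simp: traj_prob_def)
    finally show ?thesis .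
  qed
  define q where "q = traj_prob mu P Ob 1 info pol1"
  have qnn: "0 \<le> q \<tau>" for \<tau> unfolding q_def by (rule traj_prob_nonneg[OF mu P Ob pol1])
  have "\<bar>MBE_obj mu P Ob T info bel pol1 - MBE_obj mu P Ob T info bel pol2\<bar>
      = \<bar>\<Sum>\<tau>\<in>trajs 1. q \<tau> * (Gv P Ob info pol1 f (T-1) \<tau> - Gv P Ob info pol2 f (T-1) \<tau>)\<bar>"
    unfolding J1 J2 S1 S2 q_def by (simp add: sum_subtractf[symmetric] right_diff_distrib)
  also have "\<dots> \<le> (\<Sum>\<tau>\<in>trajs 1. \<bar>q \<tau> * (Gv P Ob info pol1 f (T-1) \<tau> - Gv P Ob info pol2 f (T-1) \<tau>)\<bar>)"
    by (rule sum_abs)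
  also have "\<dots> \<le> (\<Sum>\<tau>\<in>(trajs 1 :: ('s list \<times> 'o list \<times> 'a list) set). q \<tau> * (real (T-1) * \<delta> * M))"
  proof (rule sum_mono)
    fix \<tau> :: "'s list \<times> 'o list \<times> 'a list"
    have "\<bar>Gv P Ob info pol1 f (T-1) \<tau> - Gv P Ob info pol2 f (T-1) \<tau>\<bar> \<le> real (T-1) * \<delta> * M"
      by (rule Gv_diff[where P=P and Ob=Ob and pA=pol1 and pB=pol2 and f=f, OF P Ob pol1 pol2 dtv fb])
    then show "\<bar>q \<tau> * (Gv P Ob info pol1 f (T-1) \<tau> - Gv P Ob info pol2 f (T-1) \<tau>)\<bar> \<le> q \<tau> * (real (T-1) * \<delta> * M)"
      using qnn[of \<tau>] by (simp add: abs_mult mult_left_mono)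
  qed
  also have "\<dots> = real (T-1) * \<delta> * M"
    unfolding sum_distrib_right[symmetric] q_def using sum_trajs_1[OF mu Ob, where P=P and info=info and pol=pol1] by simp
  also have "\<dots> \<le> real T * M * \<delta>"
  proof -
    have "real (T-1) \<le> real T" by simp
    then have "real (T-1) * (\<delta> * M) \<le> real T * (\<delta> * M)"
      using d0 M0 by (intro mult_right_mono) auto
    then show ?thesis by (simp add: ac_simps)
  qed
  finally show ?thesis unfolding M_def \<delta>_def .
qed

lemma traj_deriv:
  fixes pol :: "'p::real_normed_vector \<Rightarrow> 'i \<Rightarrow> 'a \<Rightarrow> real"
  assumes pos: "\<And>i a. pol \<theta> i a > 0"
    and der: "\<And>i a. ((\<lambda>\<theta>'. pol \<theta>' i a) has_derivative D \<theta> i a) (at \<theta>)"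
  shows "((\<lambda>\<theta>'. traj_prob mu P Ob T info (pol \<theta>') \<tau>) has_derivative
          (\<lambda>h. traj_prob mu P Ob T info (pol \<theta>) \<tau> * score T info (pol \<theta>) (D \<theta>) \<tau> h)) (at \<theta>)"
proof (cases "\<tau> \<in> trajs T")
  case False
  then show ?thesis by (simp add: traj_prob_def split: prod.splits)
next
  case True
  obtain ss os acts where te: "\<tau> = (ss,os,acts)" by (cases \<tau>) auto
  define I where "I t = info (hist_at os acts t)" for t
  define A where "A t = acts ! t" for t
  define Q where "Q t = P (ss ! t) (A t) (ss ! Suc t)" for t
  define C where "C = mu (ss ! 0) * (\<Prod>t<T. Ob (ss ! t) (os ! t))"
  define K where "K = {..<T - 1}"
  have tp: "traj_prob mu P Ob T info pl \<tau> = C * (\<Prod>t\<in>K. pl (I t) (A t) * Q t)" for pl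
    using True unfolding te traj_prob_def C_def K_def I_def A_def Q_def by simp
  have sc: "score T info (pol \<theta>) (D \<theta>) \<tau> h = (\<Sum>t\<in>K. D \<theta> (I t) (A t) h / pol \<theta> (I t) (A t))" for h
    unfolding te score_def K_def I_def A_def by simp
  have d: "((\<lambda>\<theta>'. C * (\<Prod>t\<in>K. pol \<theta>' (I t) (A t) * Q t)) has_derivative
      (\<lambda>h. C * (\<Sum>t\<in>K. D \<theta> (I t) (A t) h * Q t * (\<Prod>j\<in>K - {t}. pol \<theta> (I j) (A j) * Q j)))) (at \<theta>)"
    by (intro has_derivative_mult_right has_derivative_prod has_derivative_mult_left der)
  have eq: "C * (\<Sum>t\<in>K. D \<theta> (I t) (A t) h * Q t * (\<Prod>j\<in>K - {t}. pol \<theta> (I j) (A j) * Q j))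
      = C * (\<Prod>t\<in>K. pol \<theta> (I t) (A t) * Q t) * (\<Sum>t\<in>K. D \<theta> (I t) (A t) h / pol \<theta> (I t) (A t))" for h
  proof -
    have "D \<theta> (I t) (A t) h * Q t * (\<Prod>j\<in>K - {t}. pol \<theta> (I j) (A j) * Q j)
        = (\<Prod>t\<in>K. pol \<theta> (I t) (A t) * Q t) * (D \<theta> (I t) (A t) h / pol \<theta> (I t) (A t))" if "t \<in> K" for t
    proof -
      have "(\<Prod>t\<in>K. pol \<theta> (I t) (A t) * Q t) = pol \<theta> (I t) (A t) * Q t * (\<Prod>j\<in>K - {t}. pol \<theta> (I j) (A j) * Q j)"
        using that K_def by (simp add: prod.remove)
      then show ?thesis using pos[of "I t" "A t"] by (simp add: field_simps)
    qed
    then show ?thesis by (simp add: sum_distrib_left mult.assoc)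
  qed
  show ?thesis unfolding tp sc
    by (rule has_derivative_eq_rhs[OF d]) (simp add: eq)
qed

lemma MBE_deriv:
  fixes pol :: "'p::real_normed_vector \<Rightarrow> 'i \<Rightarrow> 'a::finite \<Rightarrow> real"
    and mu :: "'s::finite \<Rightarrow> real" and Ob :: "'s \<Rightarrow> 'o::finite \<Rightarrow> real"
  assumes pos: "\<And>i a. pol \<theta> i a > 0"
    and der: "\<And>i a. ((\<lambda>\<theta>'. pol \<theta>' i a) has_derivative D \<theta> i a) (at \<theta>)"
  shows "((\<lambda>\<theta>'. MBE_obj mu P Ob T info bel (pol \<theta>')) has_derivative
            (\<lambda>h. \<Sum>\<tau>\<in>trajs T. traj_prob mu P Ob T info (pol \<theta>) \<tau> *
                   (\<Sum>xs\<in>{xs. length xs = T}.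
                      believed_prob (belief_traj bel T \<tau>) xs *
                      (score T info (pol \<theta>) (D \<theta>) \<tau> h * entropy (emp_dist xs)))))
          (at \<theta>)"
proof -
  define Hb where "Hb \<tau> = (\<Sum>xs\<in>{xs. length xs = T}. believed_prob (belief_traj bel T \<tau>) xs * entropy (emp_dist xs))" for \<tau>
  have d: "((\<lambda>\<theta>'. \<Sum>\<tau>\<in>trajs T. traj_prob mu P Ob T info (pol \<theta>') \<tau> * Hb \<tau>) has_derivative
     (\<lambda>h. \<Sum>\<tau>\<in>trajs T. traj_prob mu P Ob T info (pol \<theta>) \<tau> * score T info (pol \<theta>) (D \<theta>) \<tau> h * Hb \<tau>)) (at \<theta>)"
    by (intro has_derivative_sum has_derivative_mult_left traj_deriv pos der)
  show ?thesis unfolding MBE_obj_def Hb_def[symmetric]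
    by (rule has_derivative_eq_rhs[OF d]) (simp add: Hb_def sum_distrib_left ac_simps)
qed

theorem theorem3:
  fixes mu :: "'s::finite \<Rightarrow> real"
    and P :: "'s \<Rightarrow> 'a::finite \<Rightarrow> 's \<Rightarrow> real"
    and Ob :: "'s \<Rightarrow> 'o::finite \<Rightarrow> real"
    and T :: nat
    and info :: "('o,'a) hist \<Rightarrow> 'i"
    and bel :: "('o,'a) hist \<Rightarrow> 's \<Rightarrow> real"
  assumes T_pos: "0 < T"
    and mu_dist: "is_dist mu"
    and P_dist: "\<And>s a. is_dist (P s a)"
    and Ob_dist: "\<And>s. is_dist (Ob s)"
    and bel_dist: "\<And>h. is_dist (bel h)"
  shows
   "(\<forall>(pol :: 'p::euclidean_space \<Rightarrow> 'i \<Rightarrow> 'a \<Rightarrow> real) (D :: 'p \<Rightarrow> 'i \<Rightarrow> 'a \<Rightarrow> 'p \<Rightarrow> real) \<Theta>.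
       open \<Theta> \<and>
       (\<forall>\<theta>\<in>\<Theta>. \<forall>i. is_dist (pol \<theta> i)) \<and>
       (\<forall>\<theta>\<in>\<Theta>. \<forall>i a. pol \<theta> i a > 0) \<and>
       (\<forall>\<theta>\<in>\<Theta>. \<forall>i a. ((\<lambda>\<theta>'. pol \<theta>' i a) has_derivative D \<theta> i a) (at \<theta>))
       \<longrightarrow>
       (\<forall>\<theta>\<in>\<Theta>.
          ((\<lambda>\<theta>'. MBE_obj mu P Ob T info bel (pol \<theta>')) has_derivative
            (\<lambda>h. \<Sum>\<tau>\<in>trajs T. traj_prob mu P Ob T info (pol \<theta>) \<tau> *
                   (\<Sum>xs\<in>{xs. length xs = T}.
                      believed_prob (belief_traj bel T \<tau>) xs *
                      (score T info (pol \<theta>) (D \<theta>) \<tau> h * entropy (emp_dist xs)))))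
          (at \<theta>)))
    \<and>
    (\<forall>(pol1 :: 'i \<Rightarrow> 'a \<Rightarrow> real) pol2 Bstar.
       (\<forall>i. is_dist (pol1 i)) \<and> (\<forall>i. is_dist (pol2 i)) \<and>
       Bstar \<in> pos_belief_trajs mu P Ob T info bel pol1 pol2 \<and>
       (\<forall>B\<in>pos_belief_trajs mu P Ob T info bel pol1 pol2.
          believed_entropy B \<le> believed_entropy Bstar)
       \<longrightarrow>
       \<bar>MBE_obj mu P Ob T info bel pol1 - MBE_obj mu P Ob T info bel pol2\<bar>
         \<le> real T * believed_entropy Bstar * policy_tv pol1 pol2)"
proof (intro conjI allI impI)
  fix pol :: "'p::euclidean_space \<Rightarrow> 'i \<Rightarrow> 'a \<Rightarrow> real" and D :: "'p \<Rightarrow> 'i \<Rightarrow> 'a \<Rightarrow> 'p \<Rightarrow> real" and \<Theta> :: "'p set"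
  assume h: "open \<Theta> \<and>
       (\<forall>\<theta>\<in>\<Theta>. \<forall>i. is_dist (pol \<theta> i)) \<and>
       (\<forall>\<theta>\<in>\<Theta>. \<forall>i a. pol \<theta> i a > 0) \<and>
       (\<forall>\<theta>\<in>\<Theta>. \<forall>i a. ((\<lambda>\<theta>'. pol \<theta>' i a) has_derivative D \<theta> i a) (at \<theta>))"
  show "\<forall>\<theta>\<in>\<Theta>.
          ((\<lambda>\<theta>'. MBE_obj mu P Ob T info bel (pol \<theta>')) has_derivative
            (\<lambda>h. \<Sum>\<tau>\<in>trajs T. traj_prob mu P Ob T info (pol \<theta>) \<tau> *
                   (\<Sum>xs\<in>{xs. length xs = T}.
                      believed_prob (belief_traj bel T \<tau>) xs *
                      (score T info (pol \<theta>) (D \<theta>) \<tau> h * entropy (emp_dist xs)))))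
          (at \<theta>)"
    using h by (auto intro!: MBE_deriv)
next
  fix pol1 :: "'i \<Rightarrow> 'a \<Rightarrow> real" and pol2 Bstar
  assume h: "(\<forall>i. is_dist (pol1 i)) \<and> (\<forall>i. is_dist (pol2 i)) \<and>
       Bstar \<in> pos_belief_trajs mu P Ob T info bel pol1 pol2 \<and>
       (\<forall>B\<in>pos_belief_trajs mu P Ob T info bel pol1 pol2.
          believed_entropy B \<le> believed_entropy Bstar)"
  show "\<bar>MBE_obj mu P Ob T info bel pol1 - MBE_obj mu P Ob T info bel pol2\<bar>
         \<le> real T * believed_entropy Bstar * policy_tv pol1 pol2"
    using h by (intro part2[OF T_pos mu_dist P_dist Ob_dist bel_dist]) auto
qed

end
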